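(* Let $\mathcal{D}=(\mathcal{P},\mathcal{B},\mathcal{I})$ be a quasi-symmetric $(v,b,r,k,\lambda_1,0)$ SPBIBD of type $(k-1,t)$ with intersection numbers $x=0$ and $y=1$, let $\Gamma$ be its incidence graph, and assume $r\ge3$. Then: (i) $\Gamma$ is almost $2$-$\mathcal{B}$-homogeneous if and only if $\mathcal{D}$ is a generalized quadrangle; (ii) $\Gamma$ is not $2$-$\mathcal{B}$-homogeneous.
   Context: A design $\mathcal{D}=(\mathcal{P},\mathcal{B},\mathcal{I})$ is an incidence structure with $|\mathcal{P}|=v$, $|\mathcal{B}|=b$, every block incident with exactly $k$ points and every point with exactly $r$ blocks; standing assumptions: $v>k$ and $r<b$. $(p,B)$ is a flag if $p\in B$, a non-flag otherwise. $\mathcal{D}$ is a $(v,b,r,k,\lambda_1,\lambda_2)$ SPBIBD of type $(s,t)$ if (i) any two distinct points are together in exactly $\lambda_1$ or exactly $\lambda_2$ blocks; (ii) for every flag $(p,B)$, the number of points of $B$ other than $p$ lying with $p$ in exactly $\lambda_1$ blocks is $s$; (iii) for every non-flag $(p,B)$, the number of points of $B$ lying with $p$ in exactly $\lambda_1$ blocks is $t$. Quasi-symmetric with intersection numbers $x<y$: any two distinct blocks share exactly $x$ or $y$ points, both values occurring. A partial geometry is such a design in which any two points are together in at most one block and there is a constant $t'$ ($1\le t'\le r$, $1\le t'\le k$) such that for every non-flag $(p,B)$ exactly $t'$ blocks are incident with $p$ and meet $B$; it is a generalized quadrangle if $t'=1$. The incidence graph is the bipartite graph on $\mathcal{P}\cup\mathcal{B}$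 with $p\sim B$ iff $p\in B$. $\Gamma_i(u)$ is the set of vertices at distance $i$ from $u$, $\Gamma(u)=\Gamma_1(u)$. For a $(Y,Y')$-bipartite graph in which every vertex of $Y$ has eccentricity $D\ge3$: it is almost $2$-$Y$-homogeneous if for each $1\le i\le D-2$ the number $|\Gamma(x)\cap\Gamma(y)\cap\Gamma_{i-1}(z)|$ is the same for all $x\in Y$, $y\in\Gamma_2(x)$, $z\in\Gamma_i(x)\cap\Gamma_i(y)$; $2$-$Y$-homogeneous if this holds for each $1\le i\le D-1$. Here $Y=\mathcal{B}$. *)

theory Defs
  imports Main
begin

definition blk_pts :: "'p set \<Rightarrow> ('p \<Rightarrow> 'b \<Rightarrow> bool) \<Rightarrow> 'b \<Rightarrow> 'p set" where
  "blk_pts P I B = {p \<in> P. I p B}"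

definition pt_blks :: "'b set \<Rightarrow> ('p \<Rightarrow> 'b \<Rightarrow> bool) \<Rightarrow> 'p \<Rightarrow> 'b set" where
  "pt_blks Bs I p = {B \<in> Bs. I p B}"

definition design ::
  "'p set \<Rightarrow> 'b set \<Rightarrow> ('p \<Rightarrow> 'b \<Rightarrow> bool) \<Rightarrow> nat \<Rightarrow> nat \<Rightarrow> nat \<Rightarrow> nat \<Rightarrow> bool" where
  "design P Bs I v b r k \<longleftrightarrow>
     finite P \<and> finite Bs \<and> card P = v \<and> card Bs = b \<and>
     (\<forall>B\<in>Bs. card (blk_pts P I B) = k) \<and>
     (\<forall>p\<in>P. card (pt_blks Bs I p) = r) \<and>
     v > k \<and> r < b"

definition pair_count :: "'b set \<Rightarrow> ('p \<Rightarrow> 'b \<Rightarrow> bool) \<Rightarrow> 'p \<Rightarrow> 'p \<Rightarrow> nat" where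
  "pair_count Bs I p q = card {B \<in> Bs. I p B \<and> I q B}"

definition SPBIBD ::
  "'p set \<Rightarrow> 'b set \<Rightarrow> ('p \<Rightarrow> 'b \<Rightarrow> bool) \<Rightarrow> nat \<Rightarrow> nat \<Rightarrow> nat \<Rightarrow> nat \<Rightarrow> nat \<Rightarrow> nat
     \<Rightarrow> nat \<Rightarrow> nat \<Rightarrow> bool" where
  "SPBIBD P Bs I v b r k lam1 lam2 s t \<longleftrightarrow>
     design P Bs I v b r k \<and>
     (\<forall>p\<in>P. \<forall>q\<in>P. p \<noteq> q \<longrightarrow> pair_count Bs I p q = lam1 \<or> pair_count Bs I p q = lam2) \<and>
     (\<forall>p\<in>P. \<forall>B\<in>Bs. I p B \<longrightarrow>
        card {q \<in> P. q \<noteq> p \<and> I q B \<and> pair_count Bs I p q = lam1} = s) \<and>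
     (\<forall>p\<in>P. \<forall>B\<in>Bs. \<not> I p B \<longrightarrow>
        card {q \<in> P. I q B \<and> pair_count Bs I p q = lam1} = t)"

definition quasi_symmetric ::
  "'p set \<Rightarrow> 'b set \<Rightarrow> ('p \<Rightarrow> 'b \<Rightarrow> bool) \<Rightarrow> nat \<Rightarrow> nat \<Rightarrow> bool" where
  "quasi_symmetric P Bs I x y \<longleftrightarrow>
     x < y \<and>
     (\<forall>B\<in>Bs. \<forall>C\<in>Bs. B \<noteq> C \<longrightarrow>
        card (blk_pts P I B \<inter> blk_pts P I C) = x \<or> card (blk_pts P I B \<inter> blk_pts P I C) = y) \<and>
     (\<exists>B\<in>Bs. \<exists>C\<in>Bs. B \<noteq> C \<and> card (blk_pts P I B \<inter> blk_pts P I C) = x) \<and>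
     (\<exists>B\<in>Bs. \<exists>C\<in>Bs. B \<noteq> C \<and> card (blk_pts P I B \<inter> blk_pts P I C) = y)"

definition partial_geometry ::
  "'p set \<Rightarrow> 'b set \<Rightarrow> ('p \<Rightarrow> 'b \<Rightarrow> bool) \<Rightarrow> nat \<Rightarrow> nat \<Rightarrow> nat \<Rightarrow> nat \<Rightarrow> nat \<Rightarrow> bool" where
  "partial_geometry P Bs I v b r k t' \<longleftrightarrow>
     design P Bs I v b r k \<and>
     (\<forall>p\<in>P. \<forall>q\<in>P. p \<noteq> q \<longrightarrow> pair_count Bs I p q \<le> 1) \<and>
     1 \<le> t' \<and> t' \<le> r \<and> t' \<le> k \<and>
     (\<forall>p\<in>P. \<forall>B\<in>Bs. \<not> I p B \<longrightarrow>
        card {C \<in> Bs. I p C \<and> (\<exists>q\<in>P. I q C \<and> I q B)} = t')"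

definition generalized_quadrangle ::
  "'p set \<Rightarrow> 'b set \<Rightarrow> ('p \<Rightarrow> 'b \<Rightarrow> bool) \<Rightarrow> nat \<Rightarrow> nat \<Rightarrow> nat \<Rightarrow> nat \<Rightarrow> bool" where
  "generalized_quadrangle P Bs I v b r k \<longleftrightarrow> partial_geometry P Bs I v b r k 1"

definition inc_graph_V :: "'p set \<Rightarrow> 'b set \<Rightarrow> ('p + 'b) set" where
  "inc_graph_V P Bs = Inl ` P \<union> Inr ` Bs"

fun inc_graph_E :: "'p set \<Rightarrow> 'b set \<Rightarrow> ('p \<Rightarrow> 'b \<Rightarrow> bool) \<Rightarrow> ('p + 'b) \<Rightarrow> ('p + 'b) \<Rightarrow> bool" where
  "inc_graph_E P Bs I (Inl p) (Inr B) = (p \<in> P \<and> B \<in> Bs \<and> I p B)"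
| "inc_graph_E P Bs I (Inr B) (Inl p) = (p \<in> P \<and> B \<in> Bs \<and> I p B)"
| "inc_graph_E P Bs I _ _ = False"

definition walk_of_len :: "('v \<Rightarrow> 'v \<Rightarrow> bool) \<Rightarrow> 'v \<Rightarrow> 'v \<Rightarrow> nat \<Rightarrow> bool" where
  "walk_of_len E u w n \<longleftrightarrow>
     (\<exists>xs. length xs = Suc n \<and> hd xs = u \<and> last xs = w \<and>
           (\<forall>i<n. E (xs ! i) (xs ! Suc i)))"

definition gdist :: "('v \<Rightarrow> 'v \<Rightarrow> bool) \<Rightarrow> 'v \<Rightarrow> 'v \<Rightarrow> nat" where
  "gdist E u w = (LEAST n. walk_of_len E u w n)"

definition sphere :: "'v set \<Rightarrow> ('v \<Rightarrow> 'v \<Rightarrow> bool) \<Rightarrow> 'v \<Rightarrow> nat \<Rightarrow> 'v set" where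
  "sphere V E u i = {w \<in> V. (\<exists>n. walk_of_len E u w n) \<and> gdist E u w = i}"

definition has_eccentricity :: "'v set \<Rightarrow> ('v \<Rightarrow> 'v \<Rightarrow> bool) \<Rightarrow> 'v \<Rightarrow> nat \<Rightarrow> bool" where
  "has_eccentricity V E u D \<longleftrightarrow>
     (\<forall>w\<in>V. \<exists>n. walk_of_len E u w n) \<and>
     (\<forall>w\<in>V. gdist E u w \<le> D) \<and> (\<exists>w\<in>V. gdist E u w = D)"

definition hom_cond :: "'v set \<Rightarrow> ('v \<Rightarrow> 'v \<Rightarrow> bool) \<Rightarrow> 'v set \<Rightarrow> nat \<Rightarrow> bool" where
  "hom_cond V E Y m \<longleftrightarrow>
     (\<forall>i. 1 \<le> i \<and> i \<le> m \<longrightarrow>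
       (\<exists>c. \<forall>x\<in>Y. \<forall>y\<in>sphere V E x 2. \<forall>z\<in>sphere V E x i \<inter> sphere V E y i.
          card (sphere V E x 1 \<inter> sphere V E y 1 \<inter> sphere V E z (i - 1)) = c))"

definition almost_2_hom :: "'v set \<Rightarrow> ('v \<Rightarrow> 'v \<Rightarrow> bool) \<Rightarrow> 'v set \<Rightarrow> bool" where
  "almost_2_hom V E Y \<longleftrightarrow>
     (\<exists>D\<ge>3. (\<forall>x\<in>Y. has_eccentricity V E x D) \<and> hom_cond V E Y (D - 2))"

definition two_hom :: "'v set \<Rightarrow> ('v \<Rightarrow> 'v \<Rightarrow> bool) \<Rightarrow> 'v set \<Rightarrow> bool" where
  "two_hom V E Y \<longleftrightarrow>
     (\<exists>D\<ge>3. (\<forall>x\<in>Y. has_eccentricity V E x D) \<and> hom_cond V E Y (D - 1))"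

end

theory Submission
  imports Defs
begin

lemma walk_0[simp]: "walk_of_len E u w 0 \<longleftrightarrow> u = w"
proof
  assume "walk_of_len E u w 0"
  then obtain xs where "length xs = 1" "hd xs = u" "last xs = w" unfolding walk_of_len_def by auto
  then show "u = w" by (cases xs) auto
next
  assume "u = w" then show "walk_of_len E u w 0" unfolding walk_of_len_def by (intro exI[of _ "[u]"]) auto
qed

lemma walk_Suc: "walk_of_len E u w (Suc n) \<longleftrightarrow> (\<exists>m. walk_of_len E u m n \<and> E m w)"
proof
  assume "walk_of_len E u w (Suc n)"
  then obtain xs where xs: "length xs = Suc (Suc n)" "hd xs = u" "last xs = w"
    "\<forall>i<Suc n. E (xs ! i) (xs ! Suc i)" unfolding walk_of_len_def by blast
  define ys where "ys = butlast xs"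
  have ly: "length ys = Suc n" using xs(1) by (simp add: ys_def)
  have nth: "\<And>i. i < Suc n \<Longrightarrow> ys ! i = xs ! i" using xs(1) by (simp add: ys_def nth_butlast)
  have "hd ys = u" using xs(1,2) ly nth[of 0] hd_conv_nth[of ys] hd_conv_nth[of xs] by force
  moreover have "last ys = xs ! n" using ly nth[of n] last_conv_nth[of ys] by force
  moreover have "\<forall>i<n. E (ys ! i) (ys ! Suc i)" using xs(4) nth by auto
  ultimately have "walk_of_len E u (xs ! n) n" unfolding walk_of_len_def using ly by blast
  moreover have "E (xs ! n) w" using xs(1,3) xs(4)[rule_format, of n] last_conv_nth[of xs] by force
  ultimately show "\<exists>m. walk_of_len E u m n \<and> E m w" by blast
next
  assume "\<exists>m. walk_of_len E u m n \<and> E m w"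
  then obtain m ys where ys: "length ys = Suc n" "hd ys = u" "last ys = m"
    "\<forall>i<n. E (ys ! i) (ys ! Suc i)" and E: "E m w" unfolding walk_of_len_def by blast
  define xs where "xs = ys @ [w]"
  have "length xs = Suc (Suc n)" by (simp add: xs_def ys(1))
  moreover have "hd xs = u" using ys(1,2) by (cases ys) (auto simp: xs_def)
  moreover have "last xs = w" by (simp add: xs_def)
  moreover have "\<forall>i<Suc n. E (xs ! i) (xs ! Suc i)"
  proof (intro allI impI)
    fix i assume i: "i < Suc n"
    show "E (xs ! i) (xs ! Suc i)"
    proof (cases "i < n")
      case True then show ?thesis using ys by (simp add: xs_def nth_append)
    next
      case False then have "i = n" using i by simp
      moreover have "ys ! n = m" using ys(1,3) last_conv_nth[of ys] by force
      ultimately show ?thesis using ys(1) E by (simp add: xs_def nth_append)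
    qed
  qed
  ultimately show "walk_of_len E u w (Suc n)" unfolding walk_of_len_def by blast
qed

lemma sphere_char: "w \<in> sphere V E u n \<longleftrightarrow> w \<in> V \<and> walk_of_len E u w n \<and> (\<forall>m<n. \<not> walk_of_len E u w m)"
proof
  assume "w \<in> sphere V E u n"
  then have w: "w \<in> V" "\<exists>n. walk_of_len E u w n" "(LEAST n. walk_of_len E u w n) = n"
    unfolding sphere_def gdist_def by auto
  show "w \<in> V \<and> walk_of_len E u w n \<and> (\<forall>m<n. \<not> walk_of_len E u w m)"
    using w LeastI_ex[OF w(2)] not_less_Least[where P="\<lambda>n. walk_of_len E u w n"] by auto
next
  assume a: "w \<in> V \<and> walk_of_len E u w n \<and> (\<forall>m<n. \<not> walk_of_len E u w m)"
  then have "(LEAST n. walk_of_len E u w n) = n"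
    by (intro Least_equality) (auto simp: not_less[symmetric])
  then show "w \<in> sphere V E u n" using a unfolding sphere_def gdist_def by auto
qed

lemma gdist_le: "walk_of_len E u w n \<Longrightarrow> gdist E u w \<le> n"
  unfolding gdist_def by (rule Least_le)

lemma gdist_eq: "walk_of_len E u w n \<Longrightarrow> (\<forall>m<n. \<not> walk_of_len E u w m) \<Longrightarrow> gdist E u w = n"
  unfolding gdist_def by (intro Least_equality) (auto simp: not_less[symmetric])

lemma walk_Inl_Suc[simp]: "walk_of_len (inc_graph_E P Bs I) u (Inl p) (Suc n) \<longleftrightarrow>
   (\<exists>B. walk_of_len (inc_graph_E P Bs I) u (Inr B) n \<and> p \<in> P \<and> B \<in> Bs \<and> I p B)"
  unfolding walk_Suc
  apply (rule iffI)
   apply clarsimp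
  subgoal for m by (cases m) auto
  by auto

lemma walk_Inr_Suc[simp]: "walk_of_len (inc_graph_E P Bs I) u (Inr B) (Suc n) \<longleftrightarrow>
   (\<exists>p. walk_of_len (inc_graph_E P Bs I) u (Inl p) n \<and> p \<in> P \<and> B \<in> Bs \<and> I p B)"
  unfolding walk_Suc
  apply (rule iffI)
   apply clarsimp
  subgoal for m by (cases m) auto
  by auto

lemma less4: "(\<forall>m<(4::nat). Q m) \<longleftrightarrow> Q 0 \<and> Q 1 \<and> Q 2 \<and> Q 3"
  by (auto simp: numeral_eq_Suc less_Suc_eq)

lemma all_less_Suc_iff: "(\<forall>m<Suc n. Q m) \<longleftrightarrow> (\<forall>m<n. Q m) \<and> Q n"
  by (auto simp: less_Suc_eq)

lemmas wsimps = walk_Inl_Suc walk_Inr_Suc numeral_eq_Suc One_nat_def all_less_Suc_iff sphere_char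

lemma V_Inl[simp]: "Inl p \<in> inc_graph_V P Bs \<longleftrightarrow> p \<in> P"
  by (auto simp: inc_graph_V_def)
lemma V_Inr[simp]: "Inr B \<in> inc_graph_V P Bs \<longleftrightarrow> B \<in> Bs"
  by (auto simp: inc_graph_V_def)

lemma S0: "w \<in> inc_graph_V P Bs \<Longrightarrow> sphere (inc_graph_V P Bs) (inc_graph_E P Bs I) w 0 = {w}"
  by (auto simp: sphere_char)

lemma S1_blk: "B \<in> Bs \<Longrightarrow> sphere (inc_graph_V P Bs) (inc_graph_E P Bs I) (Inr B) 1 = Inl ` blk_pts P I B"
  apply (rule set_eqI)
  subgoal for w by (cases w) (auto simp: wsimps blk_pts_def)
  done

lemma mem_S2_blk: "B \<in> Bs \<Longrightarrow> w \<in> sphere (inc_graph_V P Bs) (inc_graph_E P Bs I) (Inr B) 2 \<longleftrightarrow>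
   (\<exists>C. w = Inr C \<and> C \<in> Bs \<and> C \<noteq> B \<and> (\<exists>q\<in>P. I q B \<and> I q C))"
  by (cases w) (auto simp: wsimps)

lemma mem_S3_blk: "B \<in> Bs \<Longrightarrow> Inl z \<in> sphere (inc_graph_V P Bs) (inc_graph_E P Bs I) (Inr B) 3 \<longleftrightarrow>
   z \<in> P \<and> \<not> I z B \<and> (\<exists>C\<in>Bs. \<exists>q\<in>P. I q B \<and> I q C \<and> I z C)"
  by (auto simp: wsimps)

lemma mem_S3_blk': "B \<in> Bs \<Longrightarrow> w \<in> sphere (inc_graph_V P Bs) (inc_graph_E P Bs I) (Inr B) 3 \<longleftrightarrow>
   (\<exists>z. w = Inl z \<and> z \<in> P \<and> \<not> I z B \<and> (\<exists>C\<in>Bs. \<exists>q\<in>P. I q B \<and> I q C \<and> I z C))"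
  by (cases w) (auto simp: wsimps)

lemma mem_S2_pt: "z \<in> P \<Longrightarrow> Inl q \<in> sphere (inc_graph_V P Bs) (inc_graph_E P Bs I) (Inl z) 2 \<longleftrightarrow>
   q \<in> P \<and> q \<noteq> z \<and> (\<exists>C\<in>Bs. I z C \<and> I q C)"
  by (auto simp: wsimps)

lemma mem_S4_blk: "B \<in> Bs \<Longrightarrow> C \<in> Bs \<Longrightarrow> (\<forall>q\<in>P. \<not> (I q B \<and> I q C)) \<Longrightarrow>
   p \<in> P \<Longrightarrow> q \<in> P \<Longrightarrow> W \<in> Bs \<Longrightarrow> I q B \<Longrightarrow> I q W \<Longrightarrow> I p W \<Longrightarrow> I p C \<Longrightarrow>
   Inr C \<in> sphere (inc_graph_V P Bs) (inc_graph_E P Bs I) (Inr B) 4"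
  by (auto simp: wsimps)

lemma card2: "card {a, b} \<le> 2"
  by (cases "a = b") auto

lemma int3: "A \<inter> B = {a} \<Longrightarrow> a \<in> C \<Longrightarrow> A \<inter> B \<inter> C = {a}"
  by auto

lemma int3e: "A \<inter> B = {a} \<Longrightarrow> a \<notin> C \<Longrightarrow> A \<inter> B \<inter> C = {}"
  by auto

lemma blk_mem: "q \<in> blk_pts P I B \<longleftrightarrow> q \<in> P \<and> I q B"
  by (simp add: blk_pts_def)

lemma hom_cond_mono: "hom_cond V E Y m \<Longrightarrow> m' \<le> m \<Longrightarrow> hom_cond V E Y m'"
  unfolding hom_cond_def by auto

theorem proposition4p13:
  fixes P :: "'p set" and Bs :: "'b set" and I :: "'p \<Rightarrow> 'b \<Rightarrow> bool"
    and v b r k lam1 t :: nat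
  assumes "SPBIBD P Bs I v b r k lam1 0 (k - 1) t"
    and "quasi_symmetric P Bs I 0 1"
    and "r \<ge> 3"
  shows "(almost_2_hom (inc_graph_V P Bs) (inc_graph_E P Bs I) (Inr ` Bs)
            \<longleftrightarrow> generalized_quadrangle P Bs I v b r k)
       \<and> \<not> two_hom (inc_graph_V P Bs) (inc_graph_E P Bs I) (Inr ` Bs)"
proof -
  let ?V = "inc_graph_V P Bs"
  let ?E = "inc_graph_E P Bs I"
  let ?S = "sphere ?V ?E"
  have des: "design P Bs I v b r k" using assms(1) unfolding SPBIBD_def by blast
  have flag: "\<forall>p\<in>P. \<forall>B\<in>Bs. I p B \<longrightarrow>
        card {q \<in> P. q \<noteq> p \<and> I q B \<and> pair_count Bs I p q = lam1} = k - 1"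
    using assms(1) unfolding SPBIBD_def by blast
  have nonflag: "\<forall>p\<in>P. \<forall>B\<in>Bs. \<not> I p B \<longrightarrow>
        card {q \<in> P. I q B \<and> pair_count Bs I p q = lam1} = t"
    using assms(1) unfolding SPBIBD_def by blast
  have finP: "finite P" and finBs: "finite Bs" and cardB: "\<And>B. B \<in> Bs \<Longrightarrow> card (blk_pts P I B) = k"
    and cardp: "\<And>p. p \<in> P \<Longrightarrow> card (pt_blks Bs I p) = r" and vk: "k < card P"
    using des unfolding design_def by auto
  have qs1: "\<And>B C. B \<in> Bs \<Longrightarrow> C \<in> Bs \<Longrightarrow> B \<noteq> C \<Longrightarrow> card (blk_pts P I B \<inter> blk_pts P I C) \<le> 1"
    using assms(2) unfolding quasi_symmetric_def by fastforce
  obtain B0 C0 where B0: "B0 \<in> Bs" "C0 \<in> Bs" "B0 \<noteq> C0" "card (blk_pts P I B0 \<inter> blk_pts P I C0) = 0"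
    using assms(2) unfolding quasi_symmetric_def by blast
  obtain B1 C1 where B1: "B1 \<in> Bs" "C1 \<in> Bs" "B1 \<noteq> C1" "card (blk_pts P I B1 \<inter> blk_pts P I C1) = 1"
    using assms(2) unfolding quasi_symmetric_def by blast
  have finblk: "\<And>B. finite (blk_pts P I B)" using finP unfolding blk_pts_def by simp
  have finpt: "\<And>p. finite (pt_blks Bs I p)" using finBs unfolding pt_blks_def by simp
  have disj0: "\<forall>q\<in>P. \<not> (I q B0 \<and> I q C0)"
    using B0(4) finblk[of B0] unfolding blk_pts_def by auto
  obtain q1 where q1: "q1 \<in> P" "I q1 B1" "I q1 C1"
  proof -
    from B1(4) obtain a where a: "blk_pts P I B1 \<inter> blk_pts P I C1 = {a}" by (rule card_1_singletonE)
    have "a \<in> blk_pts P I B1 \<inter> blk_pts P I C1" using a by simp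
    then have "a \<in> P" "I a B1" "I a C1" by (simp_all add: blk_pts_def)
    then show ?thesis by (rule that)
  qed
  have uniq: "\<And>p q B C. p \<in> P \<Longrightarrow> q \<in> P \<Longrightarrow> p \<noteq> q \<Longrightarrow> B \<in> Bs \<Longrightarrow> C \<in> Bs \<Longrightarrow>
      I p B \<Longrightarrow> I q B \<Longrightarrow> I p C \<Longrightarrow> I q C \<Longrightarrow> B = C"
  proof (rule ccontr)
    fix p q B C assume h: "p \<in> P" "q \<in> P" "p \<noteq> q" "B \<in> Bs" "C \<in> Bs" "I p B" "I q B" "I p C" "I q C" "B \<noteq> C"
    have sub: "{p, q} \<subseteq> blk_pts P I B \<inter> blk_pts P I C" using h by (auto simp: blk_pts_def)
    have fin: "finite (blk_pts P I B \<inter> blk_pts P I C)" using finblk[of B] by simp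
    have "card {p, q} \<le> card (blk_pts P I B \<inter> blk_pts P I C)" using card_mono[OF fin sub] .
    then show False using qs1[OF h(4,5,10)] h(3) by simp
  qed
  have k1: "k \<ge> 1"
  proof -
    have "q1 \<in> blk_pts P I B1" using q1 by (simp add: blk_pts_def)
    then have "card (blk_pts P I B1) > 0" using finblk[of B1] by (auto simp: card_gt_0_iff)
    then show ?thesis using cardB[OF B1(1)] by simp
  qed
  have ex_pt: "\<And>B. B \<in> Bs \<Longrightarrow> \<exists>q\<in>P. I q B"
  proof -
    fix B assume bB: "B \<in> Bs"
    have "card (blk_pts P I B) \<ge> 1" using cardB[OF bB] k1 by simp
    then have "blk_pts P I B \<noteq> {}" by (intro notI) simp
    then show "\<exists>q\<in>P. I q B" by (auto simp: blk_pts_def)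
  qed
  have ex_blk_other: "\<And>p X. p \<in> P \<Longrightarrow> finite X \<Longrightarrow> card X < r \<Longrightarrow> \<exists>C\<in>Bs. I p C \<and> C \<notin> X"
  proof (rule ccontr)
    fix p X assume h: "p \<in> P" "finite X" "card X < r" "\<not> (\<exists>C\<in>Bs. I p C \<and> C \<notin> X)"
    then have "pt_blks Bs I p \<subseteq> X" by (auto simp: pt_blks_def)
    then have "card (pt_blks Bs I p) \<le> card X" using h(2) by (rule card_mono[rotated])
    then show False using h(3) cardp[OF h(1)] by simp
  qed
  have ex_pt_other: "\<And>B p. B \<in> Bs \<Longrightarrow> k \<ge> 2 \<Longrightarrow> \<exists>q\<in>P. I q B \<and> q \<noteq> p"
  proof (rule ccontr)
    fix B p assume h: "B \<in> Bs" "k \<ge> 2" "\<not> (\<exists>q\<in>P. I q B \<and> q \<noteq> p)"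
    then have "blk_pts P I B \<subseteq> {p}" by (auto simp: blk_pts_def)
    then have "card (blk_pts P I B) \<le> card {p}" by (rule card_mono[rotated]) simp
    then show False using h(2) cardB[OF h(1)] by simp
  qed
  show ?thesis
  proof (cases "k = 1")
    case True
    have single: "\<And>C q q'. C \<in> Bs \<Longrightarrow> q \<in> P \<Longrightarrow> q' \<in> P \<Longrightarrow> I q C \<Longrightarrow> I q' C \<Longrightarrow> q = q'"
    proof -
      fix C q q' assume h: "C \<in> Bs" "q \<in> P" "q' \<in> P" "I q C" "I q' C"
      have c1: "card (blk_pts P I C) = 1" using cardB[OF h(1)] True by simp
      from c1 obtain a where a: "blk_pts P I C = {a}" by (rule card_1_singletonE)
      have "q \<in> blk_pts P I C" "q' \<in> blk_pts P I C" using h by (simp_all add: blk_pts_def)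
      then show "q = q'" unfolding a by simp
    qed
    obtain p0 where p0: "p0 \<in> P" "p0 \<noteq> q1"
    proof -
      have "\<not> P \<subseteq> {q1}"
      proof
        assume "P \<subseteq> {q1}"
        then have "card P \<le> card {q1}" by (rule card_mono[rotated]) simp
        then show False using vk True by simp
      qed
      then show ?thesis using that by auto
    qed
    have inv: "walk_of_len ?E (Inr B1) w n \<Longrightarrow> w = Inl q1 \<or> (\<exists>C. w = Inr C \<and> C \<in> Bs \<and> I q1 C)" for w n
    proof (induction n arbitrary: w)
      case 0 then show ?case using B1 q1 by auto
    next
      case (Suc n)
      then obtain m where m: "walk_of_len ?E (Inr B1) m n" "?E m w" by (auto simp: walk_Suc)
      from Suc.IH[OF m(1)] show ?case
      proof
        assume "m = Inl q1" then show ?case using m(2) by (cases w) auto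
      next
        assume "\<exists>C. m = Inr C \<and> C \<in> Bs \<and> I q1 C"
        then obtain C where C: "m = Inr C" "C \<in> Bs" "I q1 C" by blast
        show ?case
        proof (cases w)
          case (Inl p')
          then have "p' \<in> P" "I p' C" using m(2) C by auto
          then have "p' = q1" using single[OF C(2) _ q1(1) _ C(3)] by blast
          then show ?thesis using Inl by simp
        next
          case (Inr C') then show ?thesis using m(2) C by simp
        qed
      qed
    qed
    have noecc: "\<not> has_eccentricity ?V ?E (Inr B1) D" for D
    proof
      assume "has_eccentricity ?V ?E (Inr B1) D"
      then have all: "\<forall>w\<in>?V. \<exists>n. walk_of_len ?E (Inr B1) w n"
        unfolding has_eccentricity_def by (rule conjunct1)
      have "Inl p0 \<in> ?V" using p0(1) by simp
      with all obtain n where "walk_of_len ?E (Inr B1) (Inl p0) n" by blast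
      from inv[OF this] p0(2) show False by simp
    qed
    have xB1: "Inr B1 \<in> Inr ` Bs" using B1(1) by (rule imageI)
    have na: "\<not> almost_2_hom ?V ?E (Inr ` Bs)"
    proof
      assume "almost_2_hom ?V ?E (Inr ` Bs)"
      then obtain D where "\<forall>x\<in>Inr ` Bs. has_eccentricity ?V ?E x D" unfolding almost_2_hom_def by blast
      then have "has_eccentricity ?V ?E (Inr B1) D" using xB1 by (rule bspec)
      then show False using noecc by blast
    qed
    have nt: "\<not> two_hom ?V ?E (Inr ` Bs)"
    proof
      assume "two_hom ?V ?E (Inr ` Bs)"
      then obtain D where "\<forall>x\<in>Inr ` Bs. has_eccentricity ?V ?E x D" unfolding two_hom_def by blast
      then have "has_eccentricity ?V ?E (Inr B1) D" using xB1 by (rule bspec)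
      then show False using noecc by blast
    qed
    have ng: "\<not> generalized_quadrangle P Bs I v b r k"
    proof
      assume "generalized_quadrangle P Bs I v b r k"
      then have g: "\<forall>p\<in>P. \<forall>B\<in>Bs. \<not> I p B \<longrightarrow> card {C \<in> Bs. I p C \<and> (\<exists>q\<in>P. I q C \<and> I q B)} = 1"
        unfolding generalized_quadrangle_def partial_geometry_def by blast
      have nI: "\<not> I p0 B1"
      proof
        assume "I p0 B1" then show False using single[OF B1(1) p0(1) q1(1) _ q1(2)] p0(2) by blast
      qed
      have e: "{C \<in> Bs. I p0 C \<and> (\<exists>q\<in>P. I q C \<and> I q B1)} = {}"
      proof (rule ccontr)
        assume "{C \<in> Bs. I p0 C \<and> (\<exists>q\<in>P. I q C \<and> I q B1)} \<noteq> {}"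
        then obtain C q where C: "C \<in> Bs" "I p0 C" "q \<in> P" "I q C" "I q B1" by blast
        have "q = q1" using single[OF B1(1) C(3) q1(1) C(5) q1(2)] .
        then have "p0 = q1" using single[OF C(1) p0(1) q1(1) C(2)] C(4) by blast
        then show False using p0(2) by blast
      qed
      have "card {C \<in> Bs. I p0 C \<and> (\<exists>q\<in>P. I q C \<and> I q B1)} = 1"
        using g p0(1) B1(1) nI by blast
      then show False unfolding e by simp
    qed
    show ?thesis using na nt ng by blast
  next
    case False
    then have k2: "k \<ge> 2" using k1 by simp
    have pc_eq: "\<And>p q C. p \<in> P \<Longrightarrow> q \<in> P \<Longrightarrow> p \<noteq> q \<Longrightarrow> C \<in> Bs \<Longrightarrow> I p C \<Longrightarrow> I q C \<Longrightarrow>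
        pair_count Bs I p q = 1"
    proof -
      fix p q C assume h: "p \<in> P" "q \<in> P" "p \<noteq> q" "C \<in> Bs" "I p C" "I q C"
      have "{B \<in> Bs. I p B \<and> I q B} = {C}"
      proof (rule set_eqI, rule iffI)
        fix B assume "B \<in> {B \<in> Bs. I p B \<and> I q B}"
        then have "B \<in> Bs" "I p B" "I q B" by simp_all
        then show "B \<in> {C}" using uniq[OF h(1,2,3) _ h(4) _ _ h(5,6)] by simp
      next
        fix B assume "B \<in> {C}" then show "B \<in> {B \<in> Bs. I p B \<and> I q B}" using h by simp
      qed
      then show "pair_count Bs I p q = 1" by (simp add: pair_count_def)
    qed
    have lam1: "lam1 = 1"
    proof -
      obtain q' where q': "q' \<in> P" "I q' B1" "q' \<noteq> q1" using ex_pt_other[OF B1(1) k2] by blast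
      let ?A = "{q \<in> P. q \<noteq> q1 \<and> I q B1 \<and> pair_count Bs I q1 q = lam1}"
      let ?Z = "blk_pts P I B1 - {q1}"
      have cA: "card ?A = k - 1" using flag q1 B1 by blast
      have "q1 \<in> blk_pts P I B1" using q1 by (simp add: blk_pts_def)
      then have cA0: "card ?Z = k - 1" using cardB[OF B1(1)] by simp
      have finA0: "finite ?Z" using finblk[of B1] by simp
      have subA: "?A \<subseteq> ?Z" by (auto simp: blk_pts_def)
      have "?A = ?Z" using card_subset_eq[OF finA0 subA] cA cA0 by simp
      then have "q' \<in> ?A" using q' by (auto simp: blk_pts_def)
      then have "pair_count Bs I q1 q' = lam1" by simp
      moreover have "pair_count Bs I q1 q' = 1" using pc_eq[OF q1(1) q'(1) _ B1(1) q1(2) q'(2)] q' by auto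
      ultimately show ?thesis by simp
    qed
    have t1: "t \<ge> 1"
    proof -
      obtain C' where C': "C' \<in> Bs" "I q1 C'" "C' \<noteq> B1" using ex_blk_other[OF q1(1), of "{B1}"] assms(3) by auto
      obtain p' where p': "p' \<in> P" "I p' C'" "p' \<noteq> q1" using ex_pt_other[OF C'(1) k2] by blast
      have np: "\<not> I p' B1" using uniq[OF p'(1) q1(1) p'(3) B1(1) C'(1) _ q1(2) p'(2) C'(2)] C'(3) by blast
      have "q1 \<in> {q \<in> P. I q B1 \<and> pair_count Bs I p' q = lam1}"
        using q1 pc_eq[OF p'(1) q1(1) p'(3) C'(1) p'(2) C'(2)] lam1 by simp
      moreover have "card {q \<in> P. I q B1 \<and> pair_count Bs I p' q = lam1} = t"
        using nonflag p'(1) B1(1) np by blast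
      moreover have "finite {q \<in> P. I q B1 \<and> pair_count Bs I p' q = lam1}" using finP by simp
      ultimately have "0 < t" using card_gt_0_iff by blast
      then show ?thesis by simp
    qed
    have coll: "\<And>p B. p \<in> P \<Longrightarrow> B \<in> Bs \<Longrightarrow> \<not> I p B \<Longrightarrow> \<exists>q\<in>P. \<exists>C\<in>Bs. I q B \<and> I q C \<and> I p C"
    proof -
      fix p B assume h: "p \<in> P" "B \<in> Bs" "\<not> I p B"
      have ct: "card {q \<in> P. I q B \<and> pair_count Bs I p q = lam1} = t" using nonflag h by blast
      have "{q \<in> P. I q B \<and> pair_count Bs I p q = lam1} \<noteq> {}"
      proof
        assume e: "{q \<in> P. I q B \<and> pair_count Bs I p q = lam1} = {}"
        have "card {q \<in> P. I q B \<and> pair_count Bs I p q = lam1} = 0" unfolding e by simp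
        then show False using ct t1 by simp
      qed
      then obtain q where q: "q \<in> P" "I q B" "pair_count Bs I p q = lam1" by blast
      have "card {C \<in> Bs. I p C \<and> I q C} = 1" using q(3) lam1 unfolding pair_count_def by simp
      then obtain C where eC: "{C \<in> Bs. I p C \<and> I q C} = {C}" by (rule card_1_singletonE)
      have "C \<in> {C \<in> Bs. I p C \<and> I q C}" unfolding eC by simp
      then have "C \<in> Bs" "I p C" "I q C" by simp_all
      then show "\<exists>q\<in>P. \<exists>C\<in>Bs. I q B \<and> I q C \<and> I p C" using q(1,2) by blast
    qed
    have far: "\<And>B C. B \<in> Bs \<Longrightarrow> C \<in> Bs \<Longrightarrow> (\<forall>q\<in>P. \<not> (I q B \<and> I q C)) \<Longrightarrow> Inr C \<in> ?S (Inr B) 4"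
    proof -
      fix B C assume h: "B \<in> Bs" "C \<in> Bs" "\<forall>q\<in>P. \<not> (I q B \<and> I q C)"
      obtain p where p: "p \<in> P" "I p C" using ex_pt[OF h(2)] by blast
      have nIp: "\<not> I p B" using h(3) p by blast
      obtain q W where qW: "q \<in> P" "W \<in> Bs" "I q B" "I q W" "I p W" using coll[OF p(1) h(1) nIp] by blast
      show "Inr C \<in> ?S (Inr B) 4" by (rule mem_S4_blk[OF h(1-3) p(1) qW(1) qW(2) qW(3) qW(4) qW(5) p(2)])
    qed
    have Dge4: "D \<ge> 4" if "\<forall>x\<in>Inr ` Bs. has_eccentricity ?V ?E x D" for D
    proof -
      have xB0: "Inr B0 \<in> Inr ` Bs" using B0(1) by (rule imageI)
      have "has_eccentricity ?V ?E (Inr B0) D" using that xB0 by (rule bspec)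
      then have "\<forall>w\<in>?V. gdist ?E (Inr B0) w \<le> D" unfolding has_eccentricity_def by (rule conjunct2[THEN conjunct1])
      then have "gdist ?E (Inr B0) (Inr C0) \<le> D" by (rule bspec) (simp add: B0(2))
      moreover have "Inr C0 \<in> ?S (Inr B0) 4" by (rule far[OF B0(1,2) disj0])
      then have "gdist ?E (Inr B0) (Inr C0) = 4" by (simp add: sphere_def)
      ultimately show ?thesis by simp
    qed
    let ?gq = "\<forall>p\<in>P. \<forall>B\<in>Bs. \<not> I p B \<longrightarrow> card {C \<in> Bs. I p C \<and> (\<exists>q\<in>P. I q C \<and> I q B)} = 1"
    have gq_iff: "generalized_quadrangle P Bs I v b r k \<longleftrightarrow> ?gq"
    proof
      assume "generalized_quadrangle P Bs I v b r k"
      then show ?gq unfolding generalized_quadrangle_def partial_geometry_def by blast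
    next
      assume g: ?gq
      have "pair_count Bs I p q \<le> 1" if "p \<in> P" "q \<in> P" "p \<noteq> q" for p q
      proof -
        have "card {B \<in> Bs. I p B \<and> I q B} \<le> Suc 0"
          using uniq[OF that] finBs by (subst card_le_Suc0_iff_eq) auto
        then show ?thesis by (simp add: pair_count_def)
      qed
      then show "generalized_quadrangle P Bs I v b r k"
        unfolding generalized_quadrangle_def partial_geometry_def using des g assms(3) k1 by auto
    qed
    have gq_two: "\<And>p B C1 C2 q q'. ?gq \<Longrightarrow> p \<in> P \<Longrightarrow> B \<in> Bs \<Longrightarrow> \<not> I p B \<Longrightarrow> C1 \<in> Bs \<Longrightarrow> C2 \<in> Bs \<Longrightarrow>
        I p C1 \<Longrightarrow> I p C2 \<Longrightarrow> q \<in> P \<Longrightarrow> q' \<in> P \<Longrightarrow> I q C1 \<Longrightarrow> I q B \<Longrightarrow> I q' C2 \<Longrightarrow> I q' B \<Longrightarrow> C1 = C2"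
    proof -
      fix p B C1 C2 q q' assume h: ?gq "p \<in> P" "B \<in> Bs" "\<not> I p B" "C1 \<in> Bs" "C2 \<in> Bs"
        "I p C1" "I p C2" "q \<in> P" "q' \<in> P" "I q C1" "I q B" "I q' C2" "I q' B"
      have "card {C \<in> Bs. I p C \<and> (\<exists>q\<in>P. I q C \<and> I q B)} = 1" using h by blast
      then obtain X where X: "{C \<in> Bs. I p C \<and> (\<exists>q\<in>P. I q C \<and> I q B)} = {X}" by (rule card_1_singletonE)
      have "C1 \<in> {C \<in> Bs. I p C \<and> (\<exists>q\<in>P. I q C \<and> I q B)}" using h(5,7,9,11,12) by blast
      moreover have "C2 \<in> {C \<in> Bs. I p C \<and> (\<exists>q\<in>P. I q C \<and> I q B)}" using h(6,8,10,13,14) by blast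
      ultimately show "C1 = C2" unfolding X by simp
    qed
    have S1i: "?S (Inr B) 1 \<inter> ?S (Inr C) 1 = Inl ` (blk_pts P I B \<inter> blk_pts P I C)"
      if "B \<in> Bs" "C \<in> Bs" for B C
      unfolding S1_blk[OF that(1)] S1_blk[OF that(2)] by (simp add: image_Int)
    have S1ii: "?S (Inr B) 1 \<inter> ?S (Inr C) 1 \<inter> ?S (Inr D) 1
        = Inl ` (blk_pts P I B \<inter> blk_pts P I C \<inter> blk_pts P I D)"
      if "B \<in> Bs" "C \<in> Bs" "D \<in> Bs" for B C D
      unfolding S1_blk[OF that(1)] S1_blk[OF that(2)] S1_blk[OF that(3)] by (simp add: image_Int)
    have meet1: "\<And>B C q. B \<in> Bs \<Longrightarrow> C \<in> Bs \<Longrightarrow> B \<noteq> C \<Longrightarrow> q \<in> P \<Longrightarrow> I q B \<Longrightarrow> I q C \<Longrightarrow>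
       blk_pts P I B \<inter> blk_pts P I C = {q}"
    proof -
      fix B C q assume h: "B \<in> Bs" "C \<in> Bs" "B \<noteq> C" "q \<in> P" "I q B" "I q C"
      show "blk_pts P I B \<inter> blk_pts P I C = {q}"
      proof (rule set_eqI, rule iffI)
        fix x assume "x \<in> blk_pts P I B \<inter> blk_pts P I C"
        then have x: "x \<in> P" "I x B" "I x C" by (auto simp: blk_pts_def)
        show "x \<in> {q}"
        proof (rule ccontr)
          assume "x \<notin> {q}" then have "x \<noteq> q" by simp
          then show False using uniq[OF x(1) h(4) _ h(1,2) x(2) h(5) x(3) h(6)] h(3) by blast
        qed
      next
        fix x assume "x \<in> {q}" then show "x \<in> blk_pts P I B \<inter> blk_pts P I C" using h by (auto simp: blk_pts_def)
      qed
    qed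
    have part1: "almost_2_hom ?V ?E (Inr ` Bs) \<Longrightarrow> ?gq"
    proof -
      assume "almost_2_hom ?V ?E (Inr ` Bs)"
      then obtain D where D: "D \<ge> 3" "\<forall>x\<in>Inr ` Bs. has_eccentricity ?V ?E x D" "hom_cond ?V ?E (Inr ` Bs) (D - 2)"
        unfolding almost_2_hom_def by blast
      have "D \<ge> 4" using Dge4 D(2) by blast
      then have h2: "1 \<le> (2::nat) \<and> 2 \<le> D - 2" by simp
      have "\<exists>c. \<forall>x\<in>Inr ` Bs. \<forall>y\<in>?S x 2. \<forall>z\<in>?S x 2 \<inter> ?S y 2.
          card (?S x 1 \<inter> ?S y 1 \<inter> ?S z (2 - 1)) = c"
        using D(3)[unfolded hom_cond_def, THEN spec[of _ 2], THEN mp, OF h2] .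
      moreover have e21: "(2::nat) - 1 = 1" by simp
      ultimately obtain c where c: "\<forall>x\<in>Inr ` Bs. \<forall>y\<in>?S x 2. \<forall>z\<in>?S x 2 \<inter> ?S y 2.
          card (?S x 1 \<inter> ?S y 1 \<inter> ?S z 1) = c" unfolding e21 by blast
      show ?gq
      proof (intro ballI impI)
        fix p B assume h: "p \<in> P" "B \<in> Bs" "\<not> I p B"
        let ?X = "{C \<in> Bs. I p C \<and> (\<exists>q\<in>P. I q C \<and> I q B)}"
        have ne: "?X \<noteq> {}" using coll[OF h] by blast
        have "C1 = C2" if c1X: "C1 \<in> ?X" and c2X: "C2 \<in> ?X" for C1 C2
        proof (rule ccontr)
          assume ne12: "C1 \<noteq> C2"
          obtain a1 where a1: "a1 \<in> P" "I a1 C1" "I a1 B" "C1 \<in> Bs" "I p C1" using c1X by blast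
          obtain a2 where a2: "a2 \<in> P" "I a2 C2" "I a2 B" "C2 \<in> Bs" "I p C2" using c2X by blast
          have pa1: "p \<noteq> a1" using h a1 by blast
          have a12: "a1 \<noteq> a2" using uniq[OF h(1) a1(1) pa1 a1(4) a2(4)] a1 a2 ne12 by blast
          have "card {B, C1} < r" using card2[of B C1] assms(3) by simp
          then obtain C3 where C3: "C3 \<in> Bs" "I a1 C3" "C3 \<notin> {B, C1}"
            using ex_blk_other[OF a1(1), of "{B, C1}"] by auto
          have BC1: "B \<noteq> C1" using h a1 by blast
          have y: "Inr C1 \<in> ?S (Inr B) 2" unfolding mem_S2_blk[OF h(2)] using a1 BC1 by auto
          have z3: "Inr C3 \<in> ?S (Inr B) 2 \<inter> ?S (Inr C1) 2"
            unfolding Int_iff mem_S2_blk[OF h(2)] mem_S2_blk[OF a1(4)] using a1 C3 by auto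
          have "C2 \<noteq> B" using h(3) a2(5) by auto
          then have z2: "Inr C2 \<in> ?S (Inr B) 2 \<inter> ?S (Inr C1) 2"
            unfolding Int_iff mem_S2_blk[OF h(2)] mem_S2_blk[OF a1(4)] using a2 ne12 h(1) a1(5) by auto
          have "card (?S (Inr B) 1 \<inter> ?S (Inr C1) 1 \<inter> ?S (Inr C3) 1) = 1"
          proof -
            have "a1 \<in> blk_pts P I C3" using C3(2) a1(1) by (simp add: blk_mem)
            then have "blk_pts P I B \<inter> blk_pts P I C1 \<inter> blk_pts P I C3 = {a1}"
              by (rule int3[OF meet1[OF h(2) a1(4) BC1 a1(1) a1(3) a1(2)]])
            then show ?thesis using S1ii[OF h(2) a1(4) C3(1)] by simp
          qed
          moreover have "card (?S (Inr B) 1 \<inter> ?S (Inr C1) 1 \<inter> ?S (Inr C2) 1) = 0"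
          proof -
            have "\<not> I a1 C2" using uniq[OF a1(1) a2(1) a12 h(2) a2(4) a1(3) a2(3) _ a2(2)] h a2 by blast
            then have "a1 \<notin> blk_pts P I C2" by (simp add: blk_mem)
            then have "blk_pts P I B \<inter> blk_pts P I C1 \<inter> blk_pts P I C2 = {}"
              by (rule int3e[OF meet1[OF h(2) a1(4) BC1 a1(1) a1(3) a1(2)]])
            then show ?thesis using S1ii[OF h(2) a1(4) a2(4)] by simp
          qed
          moreover have xB: "Inr B \<in> Inr ` Bs" using h(2) by (rule imageI)
          moreover have "card (?S (Inr B) 1 \<inter> ?S (Inr C1) 1 \<inter> ?S (Inr C3) 1) = c"
            using c[rule_format, OF xB y z3] .
          moreover have "card (?S (Inr B) 1 \<inter> ?S (Inr C1) 1 \<inter> ?S (Inr C2) 1) = c"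
            using c[rule_format, OF xB y z2] .
          ultimately show False by simp
        qed
        note eqX = this
        obtain C0' where C0': "C0' \<in> ?X" using ne by blast
        have "?X = {C0'}"
        proof (rule set_eqI, rule iffI)
          fix C assume "C \<in> ?X" then show "C \<in> {C0'}" using eqX[OF _ C0'] by simp
        next
          fix C assume "C \<in> {C0'}" then show "C \<in> ?X" using C0' by simp
        qed
        then show "card ?X = 1" by simp
      qed
    qed
    have part2: "?gq \<Longrightarrow> almost_2_hom ?V ?E (Inr ` Bs)"
    proof -
      assume g: ?gq
      have ecc: "has_eccentricity ?V ?E (Inr B) 4" if B: "B \<in> Bs" for B
      proof -
        have reach: "\<exists>n\<le>4. walk_of_len ?E (Inr B) w n" if w: "w \<in> ?V" for w
        proof (cases w)
          case (Inl p)
          then have p: "p \<in> P" using w by simp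
          show ?thesis
          proof (cases "I p B")
            case True then show ?thesis using Inl p B by (intro exI[of _ 1]) (simp add: wsimps)
          next
            case False
            then obtain q C where "q \<in> P" "C \<in> Bs" "I q B" "I q C" "I p C" using coll[OF p B] by blast
            then show ?thesis using Inl p B by (intro exI[of _ 3]) (auto simp: wsimps)
          qed
        next
          case (Inr C)
          then have C: "C \<in> Bs" using w by simp
          show ?thesis
          proof (cases "\<exists>q\<in>P. I q B \<and> I q C")
            case True then show ?thesis using Inr C B by (intro exI[of _ 2]) (auto simp: wsimps)
          next
            case False
            then show ?thesis using far[OF B C] Inr by (intro exI[of _ 4]) (auto simp: sphere_char)
          qed
        qed
        obtain p where p: "p \<in> P" "\<not> I p B"
        proof -
          have "\<not> P \<subseteq> blk_pts P I B"
          proof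
            assume "P \<subseteq> blk_pts P I B"
            then have "card P \<le> card (blk_pts P I B)" by (rule card_mono[OF finblk])
            then show False using vk cardB[OF B] by simp
          qed
          then show ?thesis using that by (auto simp: blk_pts_def)
        qed
        let ?X = "{C \<in> Bs. I p C \<and> (\<exists>q\<in>P. I q C \<and> I q B)}"
        have "card ?X = 1" using g p B by blast
        moreover have "finite ?X" using finBs by simp
        ultimately obtain C where C: "C \<in> Bs" "I p C" "C \<notin> ?X"
          using ex_blk_other[OF p(1), of ?X] assms(3) by auto
        then have "\<forall>q\<in>P. \<not> (I q B \<and> I q C)" by blast
        then have "Inr C \<in> ?S (Inr B) 4" using far B C by blast
        then have "Inr C \<in> ?V \<and> gdist ?E (Inr B) (Inr C) = 4" unfolding sphere_def by blast
        moreover have "\<forall>w\<in>?V. \<exists>n. walk_of_len ?E (Inr B) w n" using reach by blast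
        moreover have "\<forall>w\<in>?V. gdist ?E (Inr B) w \<le> 4"
        proof
          fix w assume "w \<in> ?V"
          then obtain n where "n \<le> 4" "walk_of_len ?E (Inr B) w n" using reach by blast
          then show "gdist ?E (Inr B) w \<le> 4" using gdist_le[of ?E "Inr B" w n] by simp
        qed
        ultimately show ?thesis unfolding has_eccentricity_def by blast
      qed
      have hc: "hom_cond ?V ?E (Inr ` Bs) 2"
        unfolding hom_cond_def
      proof (intro allI impI)
        fix i :: nat assume i: "1 \<le> i \<and> i \<le> 2"
        then consider "i = 1" | "i = 2" by linarith
        then show "\<exists>c. \<forall>x\<in>Inr ` Bs. \<forall>y\<in>?S x 2. \<forall>z\<in>?S x i \<inter> ?S y i.
            card (?S x 1 \<inter> ?S y 1 \<inter> ?S z (i - 1)) = c"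
        proof cases
          case 1
          have key1: "card (?S x 1 \<inter> ?S y 1 \<inter> ?S z (i - 1)) = 1" if z: "z\<in>?S x i \<inter> ?S y i" for x y z
          proof -
            have zV: "z \<in> ?V" using z unfolding sphere_def by blast
            have e: "?S z (i - 1) = {z}" using S0[OF zV] 1 by simp
            have "z \<in> ?S x 1 \<inter> ?S y 1" using z 1 by simp
            then have "?S x 1 \<inter> ?S y 1 \<inter> ?S z (i - 1) = {z}" unfolding e by auto
            then show ?thesis by simp
          qed
          show ?thesis
          proof (intro exI[of _ 1] ballI)
            fix x y z assume "z \<in> ?S x i \<inter> ?S y i"
            then show "card (?S x 1 \<inter> ?S y 1 \<inter> ?S z (i - 1)) = 1" by (rule key1)
          qed
        next
          case 2
          have key2: "card (?S x 1 \<inter> ?S y 1 \<inter> ?S z 1) = 1"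
            if x: "x \<in> Inr ` Bs" and y: "y \<in> ?S x 2" and z: "z\<in>?S x 2 \<inter> ?S y 2" for x y z
          proof -
            obtain B where B: "B \<in> Bs" "x = Inr B" using x by blast
            have "y \<in> ?S (Inr B) 2" using y B(2) by simp
            then obtain C q where C: "y = Inr C" "C \<in> Bs" "C \<noteq> B" "q \<in> P" "I q B" "I q C"
              unfolding mem_S2_blk[OF B(1)] by blast
            have "z \<in> ?S (Inr B) 2" using z B(2) by simp
            then obtain C' a where C': "z = Inr C'" "C' \<in> Bs" "C' \<noteq> B" "a \<in> P" "I a B" "I a C'"
              unfolding mem_S2_blk[OF B(1)] by blast
            have "z \<in> ?S (Inr C) 2" using z C(1) by simp
            then obtain C'' b where b0: "z = Inr C''" "C'' \<in> Bs" "C'' \<noteq> C" "b \<in> P" "I b C" "I b C''"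
              unfolding mem_S2_blk[OF C(2)] by blast
            then have "C'' = C'" using C'(1) by simp
            then have b: "C' \<noteq> C" "b \<in> P" "I b C" "I b C'" using b0 by auto
            have "I q C'"
            proof (cases "a = q")
              case True then show ?thesis using C' by simp
            next
              case False
              then have naC: "\<not> I a C" using uniq[OF C'(4) C(4) False B(1) C(2) C'(5) C(5)] C(3) C(6) by blast
              have "B = C'" using gq_two[OF g C'(4) C(2) naC B(1) C'(2) C'(5) C'(6) C(4) b(2) C(5) C(6) b(4) b(3)] .
              then show ?thesis using C' by simp
            qed
            then have "q \<in> blk_pts P I C'" using C(4) by (simp add: blk_mem)
            moreover have "B \<noteq> C" using C(3) by simp
            ultimately have "blk_pts P I B \<inter> blk_pts P I C \<inter> blk_pts P I C' = {q}"
              using int3[OF meet1[OF B(1) C(2) _ C(4) C(5) C(6)]] by blast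
            then show ?thesis using S1ii[OF B(1) C(2) C'(2)] B C C' by simp
          qed
          show ?thesis
          proof (intro exI[of _ 1] ballI)
            fix x y z assume h: "x \<in> Inr ` Bs" "y \<in> ?S x 2" "z \<in> ?S x i \<inter> ?S y i"
            have "z \<in> ?S x 2 \<inter> ?S y 2" using h(3) 2 by simp
            from key2[OF h(1,2) this] show "card (?S x 1 \<inter> ?S y 1 \<inter> ?S z (i - 1)) = 1" using 2 by simp
          qed
        qed
      qed
      show "almost_2_hom ?V ?E (Inr ` Bs)" unfolding almost_2_hom_def
        using ecc hc by (intro exI[of _ 4]) auto
    qed
    have main1: "almost_2_hom ?V ?E (Inr ` Bs) \<longleftrightarrow> generalized_quadrangle P Bs I v b r k"
      using part1 part2 gq_iff by blast
    have main2: "\<not> two_hom ?V ?E (Inr ` Bs)"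
    proof
      assume "two_hom ?V ?E (Inr ` Bs)"
      then obtain D where D: "D \<ge> 3" "\<forall>x\<in>Inr ` Bs. has_eccentricity ?V ?E x D" "hom_cond ?V ?E (Inr ` Bs) (D - 1)"
        unfolding two_hom_def by blast
      have "almost_2_hom ?V ?E (Inr ` Bs)" unfolding almost_2_hom_def
        using D hom_cond_mono[OF D(3), of "D - 2"] by auto
      then have g: ?gq using part1 by blast
      have "D \<ge> 4" using Dge4 D(2) by blast
      then have h3: "1 \<le> (3::nat) \<and> 3 \<le> D - 1" by simp
      have "\<exists>c. \<forall>x\<in>Inr ` Bs. \<forall>y\<in>?S x 2. \<forall>z\<in>?S x 3 \<inter> ?S y 3.
          card (?S x 1 \<inter> ?S y 1 \<inter> ?S z (3 - 1)) = c"
        using D(3)[unfolded hom_cond_def, THEN spec[of _ 3], THEN mp, OF h3] .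
      moreover have e31: "(3::nat) - 1 = 2" by simp
      ultimately obtain c where c: "\<forall>x\<in>Inr ` Bs. \<forall>y\<in>?S x 2. \<forall>z\<in>?S x 3 \<inter> ?S y 3.
          card (?S x 1 \<inter> ?S y 1 \<inter> ?S z 2) = c" unfolding e31 by blast
      have y: "Inr C1 \<in> ?S (Inr B1) 2" unfolding mem_S2_blk[OF B1(1)] using B1 q1 by auto
      have m11: "?S (Inr B1) 1 \<inter> ?S (Inr C1) 1 = {Inl q1}"
        using S1i[OF B1(1) B1(2)] meet1[OF B1(1) B1(2) B1(3) q1] by simp
      have "card {B1, C1} < r" using card2[of B1 C1] assms(3) by simp
      then obtain W where W: "W \<in> Bs" "I q1 W" "W \<notin> {B1, C1}"
        using ex_blk_other[OF q1(1), of "{B1, C1}"] by auto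
      obtain z1 where z1: "z1 \<in> P" "I z1 W" "z1 \<noteq> q1" using ex_pt_other[OF W(1) k2] by blast
      have z1B: "\<not> I z1 B1" using uniq[OF z1(1) q1(1) z1(3) W(1) B1(1) z1(2) W(2) _ q1(2)] W by blast
      have z1C: "\<not> I z1 C1" using uniq[OF z1(1) q1(1) z1(3) W(1) B1(2) z1(2) W(2) _ q1(3)] W by blast
      have z1S: "Inl z1 \<in> ?S (Inr B1) 3 \<inter> ?S (Inr C1) 3"
        unfolding Int_iff mem_S3_blk[OF B1(1)] mem_S3_blk[OF B1(2)] using z1 z1B z1C W q1 by auto
      have "card (?S (Inr B1) 1 \<inter> ?S (Inr C1) 1 \<inter> ?S (Inl z1) 2) = 1"
      proof -
        have "Inl q1 \<in> ?S (Inl z1) 2" unfolding mem_S2_pt[OF z1(1)] using q1 z1 W by auto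
        then show ?thesis using m11 by (simp add: Int_absorb2)
      qed
      moreover have cz2: "card (?S (Inr B1) 1 \<inter> ?S (Inr C1) 1 \<inter> ?S (Inl z2) 2) = 0"
        if z2: "z2 \<in> P" "\<not> (\<exists>U\<in>Bs. I z2 U \<and> I q1 U)" for z2
      proof -
        have "Inl q1 \<notin> ?S (Inl z2) 2" unfolding mem_S2_pt[OF z2(1)] using z2(2) by auto
        then show ?thesis using m11 by simp
      qed
      moreover obtain z2 where z2: "z2 \<in> P" "\<not> (\<exists>U\<in>Bs. I z2 U \<and> I q1 U)"
        "Inl z2 \<in> ?S (Inr B1) 3 \<inter> ?S (Inr C1) 3"
      proof -
        obtain a where a: "a \<in> P" "I a B1" "a \<noteq> q1" using ex_pt_other[OF B1(1) k2] by blast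
        obtain W' where W': "W' \<in> Bs" "I a W'" "W' \<noteq> B1"
          using ex_blk_other[OF a(1), of "{B1}"] assms(3) by auto
        obtain z2 where z2: "z2 \<in> P" "I z2 W'" "z2 \<noteq> a" using ex_pt_other[OF W'(1) k2] by blast
        have z2B: "\<not> I z2 B1" using uniq[OF z2(1) a(1) z2(3) W'(1) B1(1) z2(2) W'(2) _ a(2)] W' by blast
        have q1W: "\<not> I q1 W'" using uniq[OF q1(1) a(1) a(3)[symmetric] W'(1) B1(1) _ W'(2) q1(2) a(2)] W' by blast
        have nc: "\<not> (\<exists>U\<in>Bs. I z2 U \<and> I q1 U)"
        proof
          assume "\<exists>U\<in>Bs. I z2 U \<and> I q1 U"
          then obtain U where U: "U \<in> Bs" "I z2 U" "I q1 U" by blast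
          have "B1 = U" using gq_two[OF g q1(1) W'(1) q1W B1(1) U(1) q1(2) U(3) a(1) z2(1) a(2) W'(2) U(2) z2(2)] .
          then show False using z2B U by simp
        qed
        have z2C: "\<not> I z2 C1" using nc B1(2) q1(3) by blast
        have "Inl z2 \<in> ?S (Inr B1) 3" unfolding mem_S3_blk[OF B1(1)] using z2 z2B W' a by auto
        moreover have "Inl z2 \<in> ?S (Inr C1) 3" unfolding mem_S3_blk[OF B1(2)] using z2 z2C coll[OF z2(1) B1(2) z2C] by auto
        ultimately show ?thesis using that z2(1) nc by blast
      qed
      moreover have xB: "Inr B1 \<in> Inr ` Bs" using B1(1) by (rule imageI)
      moreover have "card (?S (Inr B1) 1 \<inter> ?S (Inr C1) 1 \<inter> ?S (Inl z1) 2) = c"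
        using c[rule_format, OF xB y z1S] .
      moreover have "card (?S (Inr B1) 1 \<inter> ?S (Inr C1) 1 \<inter> ?S (Inl z2) 2) = c"
        using c[rule_format, OF xB y z2(3)] .
      ultimately show False using cz2[OF z2(1,2)] by simp
    qed
    show ?thesis using main1 main2 by blast
  qed
qed

end
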